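(* Let $0\ne f,g\in\mathbb{R}[C]$ be psd. Assume that all zeros of $g$ in $C(\mathbb{C})$ are real and that $f/g$ is a square in $\mathbb{R}(C)$. If $g=b_1^2+\cdots+b_r^2$ with $b_1,\dots,b_r\in\mathbb{R}[C]$, then there exist $a_1,\dots,a_r\in\mathbb{R}[C]$ with $f=a_1^2+\cdots+a_r^2$ and $$\delta(a_i)=\delta(b_i)+\tfrac12\bigl(\delta(f)-\delta(g)\bigr)\quad(i=1,\dots,r).$$ In particular $2\theta(f)-\delta(f)\le 2\theta(g)-\delta(g)$.
   Context: Let $q\in\mathbb{R}[x]$ be a monic polynomial of degree four without multiple roots which is indefinite (takes both positive and negative values on $\mathbb{R}$). Let $C$ be the affine plane curve over $\mathbb{R}$ with equation $y^2+q(x)=0$, coordinate ring $\mathbb{R}[C]=\mathbb{R}[x,y]/(y^2+q(x))$, function field $\mathbb{R}(C)$. Its nonsingular projective model has exactly two points at infinity, a complex conjugate pair $\infty,\overline\infty$. For $f\in\mathbb{R}(C)^*$ put $\delta(f)=-v_\infty(f)=-v_{\overline\infty}(f)$ ($v_p$ the discrete valuation at $p$), $\delta(0)=-\infty$; for $f=a(x)+b(x)y$, $\delta(f)=\max\{\deg a,\deg b+2\}$. An element $f\in\mathbb{R}[C]$ is psd if $f(p)\ge0$ for all $p\in C(\mathbb{R})$. For $0\ne f\in\mathbb{R}[C]$, $\theta(f)$ is the least integer $d\ge0$ such that $f=f_1^2+\cdots+f_r^2$ for some $r\in\mathbb{N}$ and $f_i\in\mathbb{R}[C]$ with $\delta(f_i)\le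 d$ for all $i$; $\theta(f)=\infty$ if $f$ is not a sum of squares in $\mathbb{R}[C]$. *)

theory Defs
  imports "HOL-Computational_Algebra.Polynomial" "HOL-Library.Extended_Real"
begin

text \<open>Elements of the coordinate ring R[C] = R[x,y]/(y^2+q(x)) are represented
uniquely as a(x) + b(x) y, i.e. as pairs (a,b) of real polynomials.\<close>

type_synonym crd = "real poly \<times> real poly"

definition cadd :: "crd \<Rightarrow> crd \<Rightarrow> crd" where
  "cadd u v = (fst u + fst v, snd u + snd v)"

text \<open>Multiplication uses y^2 = - q(x).\<close>
definition cmul :: "real poly \<Rightarrow> crd \<Rightarrow> crd \<Rightarrow> crd" where
  "cmul q u v = (fst u * fst v - q * snd u * snd v, fst u * snd v + snd u * fst v)"

definition czero :: crd where "czero = (0, 0)"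

definition csq :: "real poly \<Rightarrow> crd \<Rightarrow> crd" where
  "csq q u = cmul q u u"

definition csos :: "real poly \<Rightarrow> crd list \<Rightarrow> crd" where
  "csos q us = foldr (\<lambda>u acc. cadd (csq q u) acc) us czero"

definition ceval :: "crd \<Rightarrow> complex \<Rightarrow> complex \<Rightarrow> complex" where
  "ceval u x y = poly (map_poly complex_of_real (fst u)) x
                 + poly (map_poly complex_of_real (snd u)) x * y"

definition on_curve :: "real poly \<Rightarrow> complex \<Rightarrow> complex \<Rightarrow> bool" where
  "on_curve q x y \<longleftrightarrow> y\<^sup>2 + poly (map_poly complex_of_real q) x = 0"

definition psd :: "real poly \<Rightarrow> crd \<Rightarrow> bool" where
  "psd q u \<longleftrightarrow> (\<forall>x y::real. y\<^sup>2 + poly q x = 0 \<longrightarrow> poly (fst u) x + poly (snd u) x * y \<ge> 0)"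

definition pdeg :: "real poly \<Rightarrow> ereal" where
  "pdeg p = (if p = 0 then -\<infinity> else ereal (real (degree p)))"

definition delta :: "crd \<Rightarrow> ereal" where
  "delta u = max (pdeg (fst u)) (pdeg (snd u) + 2)"

definition theta :: "real poly \<Rightarrow> crd \<Rightarrow> ereal" where
  "theta q f = (if \<exists>d::nat. \<exists>fs. f = csos q fs \<and> (\<forall>h\<in>set fs. delta h \<le> ereal (real d))
     then ereal (real (LEAST d::nat. \<exists>fs. f = csos q fs \<and> (\<forall>h\<in>set fs. delta h \<le> ereal (real d))))
     else \<infinity>)"

end

theory Submission
  imports Defs "HOL-Computational_Algebra.Computational_Algebra" "HOL-Computational_Algebra.Polynomial_FPS" "HOL-Computational_Algebra.Field_as_Ring"
begin

definition cconj :: "crd \<Rightarrow> crd" where "cconj u = (fst u, - snd u)"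
definition cnorm :: "real poly \<Rightarrow> crd \<Rightarrow> real poly" where
  "cnorm q u = fst u ^ 2 + q * snd u ^ 2"
definition cdiff :: "crd \<Rightarrow> crd \<Rightarrow> crd" where "cdiff u v = (fst u - fst v, snd u - snd v)"

lemma cmul_comm: "cmul q u v = cmul q v u"
  by (simp add: cmul_def algebra_simps)
lemma cmul_assoc: "cmul q (cmul q u v) w = cmul q u (cmul q v w)"
  by (simp add: cmul_def algebra_simps)
lemma cmul_cadd: "cmul q u (cadd v w) = cadd (cmul q u v) (cmul q u w)"
  by (simp add: cmul_def cadd_def algebra_simps)
lemma cmul_cdiff: "cmul q u (cdiff v w) = cdiff (cmul q u v) (cmul q u w)"
  by (simp add: cmul_def cdiff_def algebra_simps)
lemma cmul_czero: "cmul q u czero = czero"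
  by (simp add: cmul_def czero_def)
lemma cdiff_eq: "cdiff v w = czero \<longleftrightarrow> v = w"
  by (cases v; cases w) (auto simp: cdiff_def czero_def)
lemma cmul_conj: "cmul q u (cconj u) = (cnorm q u, 0)"
  by (simp add: cmul_def cconj_def cnorm_def power2_eq_square algebra_simps)
lemma cconj_mult: "cconj (cmul q u v) = cmul q (cconj u) (cconj v)"
  by (simp add: cmul_def cconj_def algebra_simps)
lemma cnorm_mult: "cnorm q (cmul q u v) = cnorm q u * cnorm q v"
  by (simp add: cmul_def cnorm_def power2_eq_square algebra_simps)
lemma cmul_const: "cmul q (p, 0) u = (p * fst u, p * snd u)"
  by (simp add: cmul_def)

lemma lc_nonneg_add:
  fixes P R :: "real poly"
  assumes "lead_coeff P \<ge> 0" "lead_coeff R \<ge> 0"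
  shows "degree (P + R) = max (degree P) (degree R) \<and> (P + R = 0 \<longrightarrow> P = 0 \<and> R = 0)"
proof (cases "degree P = degree R")
  case True
  show ?thesis
  proof (cases "P = 0 \<or> R = 0")
    case True then show ?thesis by auto
  next
    case False
    then have "lead_coeff P > 0" "lead_coeff R > 0" using assms
      by (auto simp: less_le)
    then have c: "coeff (P + R) (degree P) \<noteq> 0" using True by simp
    then have "degree (P + R) \<ge> degree P" by (simp add: le_degree)
    moreover have "degree (P + R) \<le> max (degree P) (degree R)" by (rule degree_add_le_max)
    moreover have "P + R \<noteq> 0" using c by (metis coeff_0)
    ultimately show ?thesis using True by auto
  qed
next
  case False
  have "P + R \<noteq> 0" using False by (metis add_eq_0_iff degree_minus)
  with False show ?thesis
    by (cases "degree P < degree R")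
       (auto simp: degree_add_eq_right degree_add_eq_left)
qed

locale curve =
  fixes q :: "real poly"
  assumes q_monic: "lead_coeff q = 1" and q_deg: "degree q = 4"
begin

lemma q_nz: "q \<noteq> 0" using q_deg by auto

lemma cnorm_props:
  "degree (cnorm q u) = max (degree (fst u ^ 2)) (degree (q * snd u ^ 2)) \<and>
   (cnorm q u = 0 \<longrightarrow> fst u ^ 2 = 0 \<and> q * snd u ^ 2 = 0)"
  unfolding cnorm_def
  by (rule lc_nonneg_add) (simp_all add: lead_coeff_mult lead_coeff_power q_monic)

lemma cnorm_eq_0: "cnorm q u = 0 \<longleftrightarrow> u = czero"
proof
  assume "cnorm q u = 0"
  then show "u = czero" using cnorm_props[of u] q_nz
    by (cases u) (auto simp: czero_def)
qed (simp add: cnorm_def czero_def)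

lemma cmul_eq_czero: "cmul q u v = czero \<longleftrightarrow> u = czero \<or> v = czero"
proof
  assume "cmul q u v = czero"
  then have "cnorm q u * cnorm q v = 0" by (metis cnorm_eq_0 cnorm_mult)
  then show "u = czero \<or> v = czero" by (auto simp: cnorm_eq_0)
qed (auto simp: cmul_czero cmul_comm[of q czero])

lemma cmul_cancel: "u \<noteq> czero \<Longrightarrow> cmul q u v = cmul q u w \<Longrightarrow> v = w"
  by (metis cdiff_eq cmul_cdiff cmul_eq_czero)

lemma deg_sq: "degree (p ^ 2) = 2 * degree (p :: real poly)"
  by (cases "p = 0") (auto simp: degree_power_eq)

lemma degree_cnorm: "degree (cnorm q u) = max (2 * degree (fst u)) (if snd u = 0 then 0 else 2 * degree (snd u) + 4)"
  using cnorm_props[of u] q_deg q_nz by (auto simp: deg_sq degree_mult_eq)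

lemma delta_cnorm: "u \<noteq> czero \<Longrightarrow> delta u = ereal (real (degree (cnorm q u)) / 2)"
  by (cases u) (auto simp: delta_def pdeg_def degree_cnorm czero_def max_def)

lemma delta_czero: "delta czero = -\<infinity>"
  by (simp add: delta_def pdeg_def czero_def)

lemma delta_not_inf: "delta u \<noteq> \<infinity>"
  by (simp add: delta_def pdeg_def max_def)

lemma delta_mult: "delta (cmul q u v) = delta u + delta v"
proof (cases "u = czero \<or> v = czero")
  case True then show ?thesis
    using delta_not_inf[of u] delta_not_inf[of v]
    by (auto simp: cmul_czero cmul_comm[of q czero] delta_czero)
next
  case False
  then have "cnorm q u \<noteq> 0" "cnorm q v \<noteq> 0" by (auto simp: cnorm_eq_0)
  then show ?thesis using False
    by (simp add: delta_cnorm cmul_eq_czero cnorm_mult degree_mult_eq add_divide_distrib)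
qed

end

definition ghom :: "(real poly \<Rightarrow> real fps) \<Rightarrow> bool" where
  "ghom E \<longleftrightarrow> (\<forall>p r. E (p + r) = E p + E r) \<and> (\<forall>p r. E (p * r) = E p * E r) \<and> E 1 = 1
     \<and> (\<forall>p. E p = 0 \<longrightarrow> p = 0)"

definition phi :: "(real poly \<Rightarrow> real fps) \<Rightarrow> real fps \<Rightarrow> crd \<Rightarrow> real fps" where
  "phi E Y u = E (fst u) + E (snd u) * Y"

definition vz :: "nat \<Rightarrow> real fps \<Rightarrow> bool" where
  "vz n F \<longleftrightarrow> (\<forall>i<n. F $ i = 0)"

lemma ghom_add: "ghom E \<Longrightarrow> E (p + r) = E p + E r" by (simp add: ghom_def)
lemma ghom_mult: "ghom E \<Longrightarrow> E (p * r) = E p * E r" by (simp add: ghom_def)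
lemma ghom_1: "ghom E \<Longrightarrow> E 1 = 1" by (simp add: ghom_def)
lemma ghom_inj: "ghom E \<Longrightarrow> E p = 0 \<Longrightarrow> p = 0" by (simp add: ghom_def)
lemma ghom_0: "ghom E \<Longrightarrow> E 0 = 0"
  using ghom_add[of E 0 0] by simp
lemma ghom_uminus: "ghom E \<Longrightarrow> E (- p) = - E p"
  using ghom_add[of E p "-p"] ghom_0[of E] by (metis add.right_inverse add_eq_0_iff)
lemma ghom_diff: "ghom E \<Longrightarrow> E (p - r) = E p - E r"
  using ghom_add[of E p "-r"] ghom_uminus[of E r] by simp
lemma ghom_power: "ghom E \<Longrightarrow> E (p ^ n) = E p ^ n"
  by (induction n) (simp_all add: ghom_1 ghom_mult)

lemma phi_mult:
  assumes "ghom E" "Y ^ 2 = - E q"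
  shows "phi E Y (cmul q u v) = phi E Y u * phi E Y v"
proof -
  have e: "E q = -(Y ^ 2)" using assms(2) by simp
  have l: "phi E Y (cmul q u v) = E (fst u) * E (fst v) - E q * E (snd u) * E (snd v)
     + (E (fst u) * E (snd v) + E (snd u) * E (fst v)) * Y"
    using assms(1) by (simp add: phi_def cmul_def ghom_add ghom_mult ghom_diff)
  show ?thesis by (subst l) (simp add: e phi_def power2_eq_square algebra_simps)
qed

lemma phi_add: "ghom E \<Longrightarrow> phi E Y (cadd u v) = phi E Y u + phi E Y v"
  by (simp add: phi_def cadd_def ghom_add algebra_simps)

lemma phi_czero: "ghom E \<Longrightarrow> phi E Y czero = 0"
  by (simp add: phi_def czero_def ghom_0)

lemma phi_csos:
  assumes "ghom E" "Y ^ 2 = - E q"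
  shows "phi E Y (csos q bs) = sum_list (map (\<lambda>b. (phi E Y b)^2) bs)"
proof (induction bs)
  case Nil then show ?case by (simp add: csos_def phi_czero[OF assms(1)])
next
  case (Cons b bs)
  have "csos q (b # bs) = cadd (csq q b) (csos q bs)" by (simp add: csos_def)
  then show ?case using Cons
    by (simp add: phi_add[OF assms(1)] csq_def phi_mult[OF assms] power2_eq_square)
qed

lemma phi_conj: "ghom E \<Longrightarrow> phi E Y (cconj u) = phi E (-Y) u"
  by (simp add: phi_def cconj_def ghom_uminus)

lemma phi_norm:
  assumes "ghom E" "Y ^ 2 = - E q"
  shows "phi E Y u * phi E (-Y) u = E (cnorm q u)"
proof -
  have e: "E q = -(Y ^ 2)" using assms(2) by simp
  have l: "E (cnorm q u) = E (fst u) ^ 2 + E q * E (snd u) ^ 2"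
    using assms(1) by (simp add: cnorm_def ghom_add ghom_mult ghom_power)
  show ?thesis unfolding l e phi_def by (simp add: power2_eq_square algebra_simps)
qed

lemma (in curve) phi_inj:
  assumes "ghom E" "Y ^ 2 = - E q" "phi E Y u = 0"
  shows "u = czero"
proof -
  have "E (cnorm q u) = 0" using phi_norm[OF assms(1,2), of u] assms(3) by simp
  then show ?thesis using ghom_inj[OF assms(1)] cnorm_eq_0 by blast
qed

lemma vz_0 [simp]: "vz 0 F" by (simp add: vz_def)
lemma vz_zero [simp]: "vz n 0" by (simp add: vz_def)
lemma vz_mono: "vz n F \<Longrightarrow> m \<le> n \<Longrightarrow> vz m F" by (simp add: vz_def)
lemma vz_add: "vz n F \<Longrightarrow> vz n G \<Longrightarrow> vz n (F + G)" by (simp add: vz_def)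
lemma vz_diff: "vz n F \<Longrightarrow> vz n G \<Longrightarrow> vz n (F - G)" by (simp add: vz_def)
lemma vz_double: "vz n (F + F) \<Longrightarrow> vz n F"
  unfolding vz_def
proof (intro allI impI)
  fix i assume "\<forall>i<n. (F + F) $ i = 0" "i < n"
  then have "(F + F) $ i = 0" by blast
  then have "F $ i + F $ i = 0" by (simp only: fps_add_nth)
  then show "F $ i = 0" by linarith
qed
lemma vz_subdegree: "vz (subdegree F) F" by (auto simp: vz_def intro: nth_less_subdegree_zero)
lemma vz_le_subdegree: "vz n F \<Longrightarrow> F \<noteq> 0 \<Longrightarrow> n \<le> subdegree F"
  using nth_subdegree_nonzero[of F] unfolding vz_def by (meson not_le)
lemma vz_mult: "vz m F \<Longrightarrow> vz n G \<Longrightarrow> vz (m + n) (F * G)"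
  unfolding vz_def fps_mult_nth
proof (intro allI impI)
  fix i assume F: "\<forall>i<m. F $ i = 0" and G: "\<forall>i<n. G $ i = 0" and "i < m + n"
  show "(\<Sum>j = 0..i. F $ j * G $ (i - j)) = 0"
  proof (rule sum.neutral, intro ballI)
    fix j assume "j \<in> {0..i}"
    show "F $ j * G $ (i - j) = 0"
    proof (cases "j < m")
      case True then show ?thesis using F by simp
    next
      case False then have "i - j < n" using \<open>i < m + n\<close> \<open>j \<in> {0..i}\<close> by auto
      then show ?thesis using G by simp
    qed
  qed
qed
lemma vz_mult_left: "vz m F \<Longrightarrow> vz m (F * G)"
  using vz_mult[of m F 0 G] by simp
lemma vz_mult_right: "vz m G \<Longrightarrow> vz m (F * G)"
  using vz_mult[of 0 F m G] by simp


lemma sq_coeff: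
  fixes F :: "real fps"
  assumes "vz j F"
  shows "(F ^ 2) $ (2 * j) = (F $ j) ^ 2"
proof -
  have "(F ^ 2) $ (2 * j) = (\<Sum>a = 0..2*j. F $ a * F $ (2 * j - a))"
    by (simp add: power2_eq_square fps_mult_nth)
  also have "\<dots> = F $ j * F $ (2 * j - j) + (\<Sum>a \<in> {0..2*j} - {j}. F $ a * F $ (2 * j - a))"
    by (subst sum.remove[of _ j]) auto
  also have "(\<Sum>a \<in> {0..2*j} - {j}. F $ a * F $ (2 * j - a)) = 0"
  proof (rule sum.neutral, intro ballI)
    fix a assume a: "a \<in> {0..2*j} - {j}"
    show "F $ a * F $ (2 * j - a) = 0"
    proof (cases "a < j")
      case True then show ?thesis using assms by (simp add: vz_def)
    next
      case False then have "2 * j - a < j" using a by auto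
      then show ?thesis using assms by (simp add: vz_def)
    qed
  qed
  finally show ?thesis by (simp add: power2_eq_square)
qed

lemma sum_list_nth_sq:
  fixes Fs :: "real fps list"
  assumes "\<forall>F\<in>set Fs. vz j F"
  shows "(sum_list (map (\<lambda>F. F ^ 2) Fs)) $ (2 * j) = sum_list (map (\<lambda>F. (F $ j) ^ 2) Fs)"
  using assms by (induction Fs) (simp_all add: sq_coeff)

lemma sos_fps:
  fixes Fs :: "real fps list"
  shows "\<exists>j0. subdegree (sum_list (map (\<lambda>F. F ^ 2) Fs)) \<le> 2 * j0 \<and> (\<forall>F\<in>set Fs. vz j0 F)"
proof (cases "\<forall>F\<in>set Fs. F = 0")
  case True
  then have "sum_list (map (\<lambda>F. F ^ 2) Fs) = 0"
    by (induction Fs) auto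
  then show ?thesis using True by (intro exI[of _ 0]) auto
next
  case False
  then obtain F0 where F0: "F0 \<in> set Fs" "F0 \<noteq> 0" by auto
  define P where "P j \<longleftrightarrow> (\<exists>F\<in>set Fs. F $ j \<noteq> 0)" for j
  have "P (subdegree F0)" unfolding P_def using F0 nth_subdegree_nonzero[of F0] by blast
  then have Pj0: "P (LEAST j. P j)" by (rule LeastI)
  define j0 where "j0 = (LEAST j. P j)"
  have vzall: "\<forall>F\<in>set Fs. vz j0 F"
  proof (intro ballI)
    fix F assume "F \<in> set Fs"
    show "vz j0 F" unfolding vz_def
    proof (intro allI impI)
      fix i assume "i < j0"
      then have "\<not> P i" unfolding j0_def by (rule not_less_Least)
      then show "F $ i = 0" using \<open>F \<in> set Fs\<close> unfolding P_def by blast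
    qed
  qed
  from Pj0 obtain F1 where F1: "F1 \<in> set Fs" "F1 $ j0 \<noteq> 0" by (auto simp: P_def j0_def)
  have "(F1 $ j0) ^ 2 \<le> sum_list (map (\<lambda>F. (F $ j0) ^ 2) Fs)"
    by (rule member_le_sum_list) (use F1 in auto)
  moreover have "(F1 $ j0) ^ 2 > 0" using F1 by simp
  ultimately have "sum_list (map (\<lambda>F. (F $ j0) ^ 2) Fs) > 0" by linarith
  then have "(sum_list (map (\<lambda>F. F ^ 2) Fs)) $ (2 * j0) \<noteq> 0"
    using sum_list_nth_sq[OF vzall] by simp
  then have "subdegree (sum_list (map (\<lambda>F. F ^ 2) Fs)) \<le> 2 * j0"
    by (rule subdegree_leI)
  then show ?thesis using vzall by blast
qed

context curve
begin

lemma key_ineq: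
  assumes E: "ghom E" and Y: "Y ^ 2 = - E q"
    and k: "cmul q k k = cmul q f g" and f: "f \<noteq> czero" and g: "g \<noteq> czero"
    and gs: "g = csos q bs" and b: "b \<in> set bs"
  shows "vz (subdegree (phi E Y g)) (phi E Y (cmul q k b))"
proof -
  let ?P = "phi E Y"
  have kk: "?P k * ?P k = ?P f * ?P g" using k phi_mult[OF E Y] by metis
  have Pf: "?P f \<noteq> 0" and Pg: "?P g \<noteq> 0" using phi_inj[OF E Y] f g by blast+
  then have Pk: "?P k \<noteq> 0" using kk by auto
  have sd: "subdegree (?P k) + subdegree (?P k) = subdegree (?P f) + subdegree (?P g)"
    using kk Pf Pg Pk by (metis subdegree_mult)
  have "?P g = sum_list (map (\<lambda>F. F ^ 2) (map ?P bs))"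
    using gs phi_csos[OF E Y] by (simp add: comp_def)
  then obtain j0 where j0: "subdegree (?P g) \<le> 2 * j0" "\<forall>F\<in>set (map ?P bs). vz j0 F"
    using sos_fps[of "map ?P bs"] by metis
  have "vz j0 (?P b)" using j0(2) b by auto
  then have "vz (subdegree (?P k) + j0) (?P k * ?P b)"
    by (intro vz_mult vz_subdegree)
  moreover have "subdegree (?P g) \<le> subdegree (?P k) + j0" using sd j0(1) by linarith
  ultimately show ?thesis using phi_mult[OF E Y] vz_mono by metis
qed

lemma local_w:
  assumes E: "ghom E" and Y: "Y ^ 2 = - E q" and g: "g \<noteq> czero"
    and hY: "vz (subdegree (phi E Y g)) (phi E Y c)"
    and hY': "vz (subdegree (phi E (-Y) g)) (phi E (-Y) c)"
  shows "vz (subdegree (E (cnorm q g))) (E (fst (cmul q c (cconj g))))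
       \<and> vz (subdegree (E (cnorm q g))) (E (snd (cmul q c (cconj g))) * Y)"
proof -
  have Y': "(-Y) ^ 2 = - E q" using Y by simp
  define w where "w = cmul q c (cconj g)"
  have Pg: "phi E Y g \<noteq> 0" using phi_inj[OF E Y] g by blast
  have Pg': "phi E (-Y) g \<noteq> 0" using phi_inj[OF E Y'] g by blast
  have n: "subdegree (E (cnorm q g)) = subdegree (phi E Y g) + subdegree (phi E (-Y) g)"
    using phi_norm[OF E Y, of g] Pg Pg' by (metis subdegree_mult)
  have w1: "phi E Y w = phi E Y c * phi E (-Y) g"
    unfolding w_def phi_mult[OF E Y] phi_conj[OF E] ..
  have w2: "phi E (-Y) w = phi E (-Y) c * phi E Y g"
    unfolding w_def phi_mult[OF E Y'] phi_conj[OF E] by simp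
  have v1: "vz (subdegree (E (cnorm q g))) (phi E Y w)"
    unfolding n w1 by (intro vz_mult hY vz_subdegree)
  have v2: "vz (subdegree (E (cnorm q g))) (phi E (-Y) w)"
    unfolding n w2 using vz_mult[OF hY' vz_subdegree[of "phi E Y g"]] by (simp add: add.commute)
  have "E (fst w) + E (fst w) = phi E Y w + phi E (-Y) w"
    by (simp add: phi_def)
  then have a: "vz (subdegree (E (cnorm q g))) (E (fst w))"
    using vz_add[OF v1 v2] vz_double by metis
  have "E (snd w) * Y + E (snd w) * Y = phi E Y w - phi E (-Y) w"
    by (simp add: phi_def)
  then have b: "vz (subdegree (E (cnorm q g))) (E (snd w) * Y)"
    using vz_diff[OF v1 v2] vz_double by metis
  show ?thesis using a b by (simp add: w_def)
qed

end

definition sh :: "real \<Rightarrow> real poly \<Rightarrow> real poly" where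
  "sh x0 p = pcompose p [:x0, 1:]"

lemma sh_back: "pcompose (sh x0 p) [:-x0, 1:] = p"
proof -
  have "pcompose [:x0, 1:] [:-x0, 1:] = [:0, 1:]" by (simp add: pcompose_pCons)
  then show ?thesis unfolding sh_def by (metis pcompose_assoc pcompose_idR)
qed

lemma pcompose_power: "pcompose (p ^ n) r = (pcompose p r) ^ n"
  by (induction n) (simp_all add: pcompose_1 pcompose_mult)

lemma monom_X_pow: "monom (1::real) n = [:0, 1:] ^ n"
  by (simp add: monom_altdef)

lemma dvd_shift: "[:-x0, 1:] ^ n dvd p \<longleftrightarrow> monom 1 n dvd sh x0 p"
proof
  assume "[:-x0, 1:] ^ n dvd p"
  then obtain r where "p = [:-x0, 1:] ^ n * r" by (auto elim: dvdE)
  then have "sh x0 p = (pcompose [:-x0, 1:] [:x0, 1:]) ^ n * sh x0 r"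
    by (simp add: sh_def pcompose_mult pcompose_power)
  also have "pcompose [:-x0, 1:] [:x0, 1:] = [:0, 1:]" by (simp add: pcompose_pCons)
  finally show "monom 1 n dvd sh x0 p" by (simp add: monom_X_pow)
next
  assume "monom 1 n dvd sh x0 p"
  then obtain r where "sh x0 p = [:0, 1:] ^ n * r" by (auto simp: monom_X_pow elim: dvdE)
  then have "pcompose (sh x0 p) [:-x0, 1:] = (pcompose [:0, 1:] [:-x0, 1:]) ^ n * pcompose r [:-x0, 1:]"
    by (simp add: pcompose_mult pcompose_power)
  also have "pcompose [:0, 1:] [:-x0, 1:] = [:-x0, 1:]" by (simp add: pcompose_pCons)
  finally show "[:-x0, 1:] ^ n dvd p" by (simp add: sh_back)
qed

lemma vz_fps_of_poly: "vz n (fps_of_poly p) \<longleftrightarrow> monom 1 n dvd p"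
  by (simp add: vz_def monom_1_dvd_iff')

lemma vz_shift: "vz n (fps_of_poly (sh x0 p)) \<longleftrightarrow> [:-x0, 1:] ^ n dvd p"
  by (simp add: vz_fps_of_poly dvd_shift)

lemma sh_eq_0: "sh x0 p = 0 \<Longrightarrow> p = 0"
  using sh_back[of x0 p] by simp

lemma sh_coeff_0: "coeff (sh x0 p) 0 = poly p x0"
  by (simp add: sh_def pcompose_coeff_0)

lemma vz_power: "vz m F \<Longrightarrow> vz (m * k) (F ^ k)"
  by (induction k) (simp_all add: vz_mult)

lemma vz_compose:
  assumes "vz m H" "G $ 0 = 0"
  shows "vz m (H oo G)"
  unfolding vz_def fps_compose_nth
proof (intro allI impI)
  fix n assume "n < m"
  show "(\<Sum>i = 0..n. H $ i * (G ^ i) $ n) = 0"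
    by (rule sum.neutral) (use assms \<open>n < m\<close> in \<open>auto simp: vz_def\<close>)
qed

lemma compose_X2_nth: "(H oo fps_X ^ 2) $ n = (if even n then H $ (n div 2) else (0::real))"
proof -
  have "(H oo fps_X ^ 2) $ n = (\<Sum>i = 0..n. if i = n div 2 \<and> even n then H $ i else 0)"
    unfolding fps_compose_nth
    by (rule sum.cong) (auto simp: power_mult[symmetric])
  also have "\<dots> = (if even n then H $ (n div 2) else 0)"
    by (cases "even n") (simp_all add: sum.delta')
  finally show ?thesis .
qed

definition Eu :: "real \<Rightarrow> real poly \<Rightarrow> real fps" where
  "Eu x0 p = fps_of_poly (sh x0 p)"

lemma ghom_Eu: "ghom (Eu x0)"
  unfolding ghom_def Eu_def sh_def
  by (auto simp: pcompose_add pcompose_mult pcompose_1 fps_of_poly_add fps_of_poly_mult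
      intro: sh_eq_0[unfolded sh_def])

definition Yu :: "real \<Rightarrow> real poly \<Rightarrow> real fps" where
  "Yu x0 q = fps_radical (\<lambda>n a. root n a) 2 (Eu x0 (-q))"

lemma Yu_props:
  assumes "poly q x0 < 0"
  shows "(Yu x0 q) ^ 2 = - Eu x0 q \<and> Yu x0 q $ 0 \<noteq> 0"
proof -
  have a0: "Eu x0 (-q) $ 0 = - poly q x0" by (simp add: Eu_def sh_coeff_0)
  then have pos: "Eu x0 (-q) $ 0 > 0" using assms by simp
  have r: "(root (Suc 1) (Eu x0 (-q) $ 0)) ^ (Suc 1) = Eu x0 (-q) $ 0"
    using pos real_root_pow_pos[of "Suc 1"] by simp
  have iff: "(root (Suc 1) (Eu x0 (-q) $ 0)) ^ (Suc 1) = Eu x0 (-q) $ 0 \<longleftrightarrow>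
     (fps_radical (\<lambda>n a. root n a) (Suc 1) (Eu x0 (-q))) ^ (Suc 1) = Eu x0 (-q)"
    using power_radical[of "Eu x0 (-q)" "\<lambda>n a. root n a" 1] pos by simp
  have "(fps_radical (\<lambda>n a. root n a) (Suc 1) (Eu x0 (-q))) ^ (Suc 1) = Eu x0 (-q)"
    using iff r by blast
  then have "(Yu x0 q) ^ 2 = Eu x0 (-q)" by (simp add: Yu_def numeral_2_eq_2)
  moreover have "Eu x0 (-q) = - Eu x0 q" using ghom_uminus[OF ghom_Eu] by blast
  moreover have "Yu x0 q $ 0 \<noteq> 0" using pos by (simp add: Yu_def)
  ultimately show ?thesis by simp
qed

context curve
begin

lemma unram_dvd:
  assumes x0: "poly q x0 < 0"
    and k: "cmul q k k = cmul q f g" and f: "f \<noteq> czero" and g: "g \<noteq> czero"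
    and gs: "g = csos q bs" and b: "b \<in> set bs"
  shows "[:-x0, 1:] ^ order x0 (cnorm q g) dvd fst (cmul q (cmul q k b) (cconj g)) \<and>
         [:-x0, 1:] ^ order x0 (cnorm q g) dvd snd (cmul q (cmul q k b) (cconj g))"
proof -
  let ?E = "Eu x0" and ?Y = "Yu x0 q"
  let ?w = "cmul q (cmul q k b) (cconj g)"
  have E: "ghom ?E" by (rule ghom_Eu)
  have Y: "?Y ^ 2 = - ?E q" and Y0: "?Y $ 0 \<noteq> 0" using Yu_props[OF x0] by auto
  have Y': "(- ?Y) ^ 2 = - ?E q" using Y by simp
  have h1: "vz (subdegree (phi ?E ?Y g)) (phi ?E ?Y (cmul q k b))"
    by (rule key_ineq[OF E Y k f g gs b])
  have h2: "vz (subdegree (phi ?E (- ?Y) g)) (phi ?E (- ?Y) (cmul q k b))"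
    by (rule key_ineq[OF E Y' k f g gs b])
  note lw = local_w[OF E Y g h1 h2]
  let ?G = "cnorm q g" and ?m = "order x0 (cnorm q g)"
  have Gnz: "?E ?G \<noteq> 0" using g cnorm_eq_0 ghom_inj[OF E] by blast
  have "vz ?m (?E ?G)" unfolding Eu_def vz_shift by (rule order_1)
  then have mle: "?m \<le> subdegree (?E ?G)" using Gnz by (rule vz_le_subdegree)
  have "vz ?m (?E (fst ?w))" using lw mle vz_mono by blast
  then have A: "[:-x0, 1:] ^ ?m dvd fst ?w" unfolding Eu_def vz_shift .
  have "vz ?m (?E (snd ?w) * ?Y * inverse ?Y)" using lw mle vz_mono vz_mult_left by blast
  then have "vz ?m (?E (snd ?w))" using inverse_mult_eq_1'[OF Y0] by (simp add: mult.assoc)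
  then have B: "[:-x0, 1:] ^ ?m dvd snd ?w" unfolding Eu_def vz_shift .
  show ?thesis using A B by blast
qed

end

definition Fr :: "real \<Rightarrow> real poly \<Rightarrow> real fps" where
  "Fr x0 q = fps_of_poly (sh x0 (-q))"

definition Tr :: "real \<Rightarrow> real poly \<Rightarrow> real fps" where
  "Tr x0 q = fps_inv (Fr x0 q) oo fps_X ^ 2"

definition Er :: "real \<Rightarrow> real poly \<Rightarrow> real poly \<Rightarrow> real fps" where
  "Er x0 q p = fps_of_poly (sh x0 p) oo Tr x0 q"

lemma fps_inv_0: "fps_inv a $ 0 = 0"
  by (simp add: fps_inv_def)

lemma X2_0: "(fps_X ^ 2 :: real fps) $ 0 = 0" by simp

lemma Tr_0: "Tr x0 q $ 0 = 0"
  by (simp add: Tr_def fps_inv_0)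

lemma vz2_Tr: "vz 2 (Tr x0 q)"
  unfolding vz_def Tr_def
proof (intro allI impI)
  fix i :: nat assume "i < 2"
  then have "i = 0 \<or> i = 1" by auto
  then show "(fps_inv (Fr x0 q) oo fps_X ^ 2) $ i = 0"
    by (auto simp: compose_X2_nth fps_inv_0)
qed

lemma ghom_Er_hom: "(\<forall>p r. Er x0 q (p + r) = Er x0 q p + Er x0 q r) \<and>
   (\<forall>p r. Er x0 q (p * r) = Er x0 q p * Er x0 q r) \<and> Er x0 q 1 = 1"
  unfolding Er_def sh_def
  by (auto simp: pcompose_add pcompose_mult pcompose_1 fps_of_poly_add fps_of_poly_mult
      fps_compose_add_distrib fps_compose_mult_distrib[OF Tr_0])

context
  fixes q :: "real poly" and x0 :: real
  assumes q0: "poly q x0 = 0" and nsq: "\<not> [:-x0, 1:] ^ 2 dvd q"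
begin

lemma Fr_0: "Fr x0 q $ 0 = 0"
  using q0 by (simp add: Fr_def sh_coeff_0)

lemma Fr_1: "Fr x0 q $ 1 \<noteq> 0"
proof
  assume "Fr x0 q $ 1 = 0"
  then have "vz 2 (Fr x0 q)" using Fr_0 unfolding vz_def
    by (metis One_nat_def less_2_cases)
  then have "[:-x0, 1:] ^ 2 dvd - q" unfolding Fr_def vz_shift .
  then show False using nsq by simp
qed

lemma Er_as_X2: "Er x0 q p = (fps_of_poly (sh x0 p) oo fps_inv (Fr x0 q)) oo fps_X ^ 2"
  unfolding Er_def Tr_def by (rule fps_compose_assoc[OF X2_0 fps_inv_0])

lemma back_Fr: "(fps_of_poly (sh x0 p) oo fps_inv (Fr x0 q)) oo Fr x0 q = fps_of_poly (sh x0 p)"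
  by (metis fps_compose_assoc[OF Fr_0 fps_inv_0] fps_inv[OF Fr_0 Fr_1] fps_compose_fps_X)

lemma vz_Er: "vz (2 * m) (Er x0 q p) \<Longrightarrow> [:-x0, 1:] ^ m dvd p"
proof -
  let ?H = "fps_of_poly (sh x0 p) oo fps_inv (Fr x0 q)"
  assume a: "vz (2 * m) (Er x0 q p)"
  have "vz m ?H" unfolding vz_def
  proof (intro allI impI)
    fix i assume "i < m"
    then have "(Er x0 q p) $ (2 * i) = 0" using a by (simp add: vz_def)
    then show "?H $ i = 0" unfolding Er_as_X2 compose_X2_nth by simp
  qed
  then have "vz m (?H oo Fr x0 q)" by (rule vz_compose[OF _ Fr_0])
  then show ?thesis unfolding back_Fr vz_shift .
qed

lemma vz_Er': "vz (2 * m) (Er x0 q p * fps_X) \<Longrightarrow> [:-x0, 1:] ^ m dvd p"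
proof -
  let ?H = "fps_of_poly (sh x0 p) oo fps_inv (Fr x0 q)"
  assume a: "vz (2 * m) (Er x0 q p * fps_X)"
  have "vz m ?H" unfolding vz_def
  proof (intro allI impI)
    fix i assume "i < m"
    then have "Suc (2 * i) < 2 * m" by simp
    then have "(Er x0 q p * fps_X) $ (Suc (2 * i)) = 0" using a unfolding vz_def by blast
    then have "(fps_X * Er x0 q p) $ (Suc (2 * i)) = 0" by (simp only: mult.commute)
    then have "(Er x0 q p) $ (2 * i) = 0" by (simp only: fps_X_mult_nth) simp
    then show "?H $ i = 0" unfolding Er_as_X2 compose_X2_nth by simp
  qed
  then have "vz m (?H oo Fr x0 q)" by (rule vz_compose[OF _ Fr_0])
  then show ?thesis unfolding back_Fr vz_shift .
qed

lemma ghom_Er: "ghom (Er x0 q)"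
  unfolding ghom_def
proof (intro conjI)
  show "\<forall>p. Er x0 q p = 0 \<longrightarrow> p = 0"
  proof (intro allI impI)
    fix p assume "Er x0 q p = 0"
    then have "vz (2 * Suc (degree p)) (Er x0 q p)" by simp
    then have "[:-x0, 1:] ^ Suc (degree p) dvd p" by (rule vz_Er)
    then show "p = 0"
      by (metis degree_linear_power dvd_imp_degree_le lessI not_le one_neq_zero)
  qed
qed (use ghom_Er_hom in auto)

lemma Er_q: "Er x0 q q = - (fps_X ^ 2)"
proof -
  have "Er x0 q (- q) = Fr x0 q oo Tr x0 q" by (simp add: Er_def Fr_def)
  also have "\<dots> = (Fr x0 q oo fps_inv (Fr x0 q)) oo fps_X ^ 2"
    unfolding Tr_def by (rule fps_compose_assoc[OF X2_0 fps_inv_0])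
  also have "\<dots> = fps_X ^ 2" by (simp add: fps_inv_right[OF Fr_0 Fr_1])
  finally have "Er x0 q (- q) = fps_X ^ 2" .
  then have "- Er x0 q q = fps_X ^ 2" using ghom_uminus[OF ghom_Er, of q] by simp
  then show ?thesis by (metis minus_minus)
qed

lemma vz_Er_G: "vz (2 * order x0 G) (Er x0 q G)"
proof -
  obtain r where r: "G = [:-x0, 1:] ^ order x0 G * r" using order_1 by (metis dvdE)
  have L: "Er x0 q [:-x0, 1:] = Tr x0 q"
    by (simp add: Er_def sh_def pcompose_pCons Tr_0)
  have "Er x0 q G = Tr x0 q ^ order x0 G * Er x0 q r"
    by (subst r) (simp add: ghom_mult[OF ghom_Er] ghom_power[OF ghom_Er] L)
  then show ?thesis using vz_mult_left[OF vz_power[OF vz2_Tr]] by metis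
qed

end

context curve
begin

lemma ram_dvd:
  assumes q0: "poly q x0 = 0" and nsq: "\<not> [:-x0, 1:] ^ 2 dvd q"
    and k: "cmul q k k = cmul q f g" and f: "f \<noteq> czero" and g: "g \<noteq> czero"
    and gs: "g = csos q bs" and b: "b \<in> set bs"
  shows "[:-x0, 1:] ^ order x0 (cnorm q g) dvd fst (cmul q (cmul q k b) (cconj g)) \<and>
         [:-x0, 1:] ^ order x0 (cnorm q g) dvd snd (cmul q (cmul q k b) (cconj g))"
proof -
  let ?E = "Er x0 q" and ?Y = "fps_X :: real fps"
  let ?w = "cmul q (cmul q k b) (cconj g)"
  have E: "ghom ?E" by (rule ghom_Er[OF q0 nsq])
  have Y: "?Y ^ 2 = - ?E q" using Er_q[OF q0 nsq] by simp
  have Y': "(- ?Y) ^ 2 = - ?E q" using Y by simp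
  have h1: "vz (subdegree (phi ?E ?Y g)) (phi ?E ?Y (cmul q k b))"
    by (rule key_ineq[OF E Y k f g gs b])
  have h2: "vz (subdegree (phi ?E (- ?Y) g)) (phi ?E (- ?Y) (cmul q k b))"
    by (rule key_ineq[OF E Y' k f g gs b])
  note lw = local_w[OF E Y g h1 h2]
  let ?G = "cnorm q g" and ?m = "order x0 (cnorm q g)"
  have Gnz: "?E ?G \<noteq> 0" using g cnorm_eq_0 ghom_inj[OF E] by blast
  have mle: "2 * ?m \<le> subdegree (?E ?G)" using vz_Er_G[OF q0 nsq] Gnz by (rule vz_le_subdegree)
  have "vz (2 * ?m) (?E (fst ?w))" using lw mle vz_mono by blast
  then have A: "[:-x0, 1:] ^ ?m dvd fst ?w" by (rule vz_Er[OF q0 nsq])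
  have "vz (2 * ?m) (?E (snd ?w) * ?Y)" using lw mle vz_mono by blast
  then have B: "[:-x0, 1:] ^ ?m dvd snd ?w" by (rule vz_Er'[OF q0 nsq])
  show ?thesis using A B by blast
qed

end

abbreviation cp :: "real poly \<Rightarrow> complex poly" where "cp p \<equiv> map_poly complex_of_real p"

lemma cp_add: "cp (p + r) = cp p + cp r"
  by (rule poly_eqI) (simp add: coeff_map_poly)
lemma cp_mult: "cp (p * r) = cp p * cp r"
  by (rule poly_eqI) (simp add: coeff_map_poly coeff_mult)
lemma cp_power: "cp (p ^ n) = cp p ^ n"
  by (induction n) (simp_all add: cp_mult)
lemma cp_lin: "cp [:-x0, 1:] = [:- complex_of_real x0, 1:]"
  by (simp add: map_poly_pCons)
lemma poly_cp_real: "poly (cp p) (complex_of_real x) = complex_of_real (poly p x)"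
  by (induction p) (auto simp: map_poly_pCons)
lemma cp_dvd: "p dvd r \<Longrightarrow> cp p dvd cp r"
  by (metis cp_mult dvd_def)
lemma cp_eq_0: "cp p = 0 \<longleftrightarrow> p = 0"
  by (simp add: map_poly_eq_0_iff)
lemma degree_cp: "degree (cp p) = degree p"
  by (rule degree_map_poly) simp

lemma rsq_nsq:
  assumes "rsquarefree (cp q)"
  shows "\<not> [:-x0, 1:] ^ 2 dvd q"
proof
  assume "[:-x0, 1:] ^ 2 dvd q"
  then have "[:- complex_of_real x0, 1:] ^ 2 dvd cp q" using cp_dvd cp_power cp_lin by metis
  moreover have "cp q \<noteq> 0" using assms by (simp add: rsquarefree_def)
  ultimately have "2 \<le> order (complex_of_real x0) (cp q)" by (simp add: order_divides)
  then show False using assms unfolding rsquarefree_def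
    by (metis One_nat_def Suc_1 not_less_eq_eq order_0I zero_le)
qed

lemma unit_if_sq_dvd_sqfree:
  fixes n q :: "real poly"
  assumes "rsquarefree (cp q)" "n ^ 2 dvd q" "n \<noteq> 0"
  shows "is_unit n"
proof (rule ccontr)
  assume "\<not> is_unit n"
  then have "degree n \<noteq> 0" using assms(3) is_unit_iff_degree by blast
  then have "\<not> constant (poly (cp n))" by (simp add: constant_degree degree_cp)
  then obtain z where "poly (cp n) z = 0" using fundamental_theorem_of_algebra by blast
  then have "[:-z, 1:] dvd cp n" by (simp add: poly_eq_0_iff_dvd)
  then have "[:-z, 1:] ^ 2 dvd cp n ^ 2" by (rule dvd_power_same)
  also have "cp n ^ 2 dvd cp q" using cp_dvd[OF assms(2)] by (simp add: cp_power)
  finally have "[:-z, 1:] ^ 2 dvd cp q" .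
  moreover have "cp q \<noteq> 0" using assms by (simp add: rsquarefree_def)
  ultimately have "2 \<le> order z (cp q)" by (simp add: order_divides)
  then show False using assms unfolding rsquarefree_def
    by (metis One_nat_def Suc_1 not_less_eq_eq order_0I zero_le)
qed

lemma sqfree_dvd:
  fixes n q s :: "real poly"
  assumes "rsquarefree (cp q)" "n ^ 2 dvd q * s ^ 2"
  shows "n dvd s"
proof (cases "n = 0")
  case True
  then have "q * s ^ 2 = 0" using assms(2) by simp
  moreover have "q \<noteq> 0" using assms(1) by (auto simp: rsquarefree_def)
  ultimately show ?thesis by simp
next
  case False
  then have gnz: "gcd n s \<noteq> 0" by simp
  obtain n1 s1 where ns: "n = n1 * gcd n s" "s = s1 * gcd n s" "coprime n1 s1"
    using gcd_coprime_exists[OF gnz] by blast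
  have e1: "n ^ 2 = n1 ^ 2 * (gcd n s) ^ 2" by (metis ns(1) power_mult_distrib)
  have e2: "q * s ^ 2 = (q * s1 ^ 2) * (gcd n s) ^ 2" by (metis ns(2) power_mult_distrib mult.assoc)
  have "n1 ^ 2 * (gcd n s) ^ 2 dvd (q * s1 ^ 2) * (gcd n s) ^ 2"
    using assms(2) unfolding e1 e2 .
  then have "n1 ^ 2 dvd q * s1 ^ 2" using gnz dvd_times_right_cancel_iff[of "(gcd n s)^2"] by simp
  moreover have "coprime (n1 ^ 2) (s1 ^ 2)" using ns(3) by simp
  ultimately have "n1 ^ 2 dvd q" by (simp add: coprime_dvd_mult_left_iff)
  moreover have "n1 \<noteq> 0" using False ns by auto
  ultimately have "is_unit n1" using unit_if_sq_dvd_sqfree[OF assms(1)] by blast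
  then have "n1 dvd s1" by (rule unit_imp_dvd)
  then have "n1 * gcd n s dvd s1 * gcd n s" by (rule mult_dvd_mono) simp
  then show ?thesis using ns(1,2) by metis
qed

lemma G_roots:
  assumes zr: "\<forall>x y. on_curve q x y \<and> ceval g x y = 0 \<longrightarrow> Im x = 0 \<and> Im y = 0"
    and z: "poly (cp (cnorm q g)) z = 0"
  shows "\<exists>x0 y0. z = complex_of_real x0 \<and> y0 ^ 2 + poly q x0 = 0"
proof -
  define y where "y = csqrt (- poly (cp q) z)"
  have y2: "y ^ 2 = - poly (cp q) z" by (simp add: y_def)
  let ?a = "poly (cp (fst g)) z" and ?b = "poly (cp (snd g)) z"
  have "poly (cp (cnorm q g)) z = ?a ^ 2 + poly (cp q) z * ?b ^ 2"
    by (simp add: cnorm_def cp_add cp_mult cp_power)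
  also have "\<dots> = ?a ^ 2 - ?b ^ 2 * y ^ 2" using y2 by simp
  also have "\<dots> = ceval g z y * ceval g z (-y)"
    unfolding ceval_def by (simp add: power2_eq_square algebra_simps)
  finally have "ceval g z y = 0 \<or> ceval g z (-y) = 0" using z by simp
  then obtain y' where y': "ceval g z y' = 0" "y' ^ 2 = - poly (cp q) z" using y2
    by (metis power2_minus)
  then have oc: "on_curve q z y'" by (simp add: on_curve_def)
  then have im: "Im z = 0" "Im y' = 0" using zr y' by blast+
  have zr: "z = complex_of_real (Re z)" and yr: "y' = complex_of_real (Re y')"
    using im by (simp_all add: complex_eq_iff)
  have "complex_of_real ((Re y') ^ 2 + poly q (Re z)) =
        (complex_of_real (Re y')) ^ 2 + poly (cp q) (complex_of_real (Re z))"
    by (simp add: poly_cp_real)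
  also have "\<dots> = y' ^ 2 + poly (cp q) z" using zr yr by simp
  also have "\<dots> = 0" using y' by simp
  finally have "(Re y') ^ 2 + poly q (Re z) = 0" by (simp only: of_real_eq_0_iff)
  then show ?thesis using zr by blast
qed

lemma dvd_from_orders:
  fixes G :: "real poly"
  shows "G \<noteq> 0 \<longrightarrow> (\<forall>z. poly (cp G) z = 0 \<longrightarrow> (\<exists>x. z = complex_of_real x)) \<longrightarrow>
    (\<forall>A. (\<forall>x. poly G x = 0 \<longrightarrow> [:-x, 1:] ^ order x G dvd A) \<longrightarrow> G dvd A)"
proof (induction G rule: poly_root_order_induct)
  case 0 then show ?case by simp
next
  case (no_roots p)
  show ?case
  proof (intro impI allI)
    assume p0: "p \<noteq> 0" and cr: "\<forall>z. poly (cp p) z = 0 \<longrightarrow> (\<exists>x. z = complex_of_real x)"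
    fix A
    have "\<not> (\<exists>z. poly (cp p) z = 0)"
      using cr no_roots poly_cp_real by (metis of_real_eq_0_iff)
    then have "constant (poly (cp p))" using fundamental_theorem_of_algebra by blast
    then have "degree p = 0" by (simp add: constant_degree degree_cp)
    then have "is_unit p" using p0 is_unit_iff_degree by blast
    then show "p dvd A" by (rule unit_imp_dvd)
  qed
next
  case (root p x n)
  show ?case
  proof (intro impI allI)
    let ?L = "[:-x, 1:] ^ n"
    assume G0: "?L * p \<noteq> 0" and cr: "\<forall>z. poly (cp (?L * p)) z = 0 \<longrightarrow> (\<exists>x. z = complex_of_real x)"
    fix A assume H: "\<forall>y. poly (?L * p) y = 0 \<longrightarrow> [:-y, 1:] ^ order y (?L * p) dvd A"
    have p0: "p \<noteq> 0" using G0 by auto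
    have Lnz: "?L \<noteq> 0" by simp
    have ox: "order x (?L * p) = n"
      using G0 root.hyps(2) by (simp add: order_mult order_power_n_n order_0I)
    have "poly (?L * p) x = 0" using root.hyps(1) by simp
    then have "?L dvd A" using H ox by metis
    then obtain A' where A': "A = ?L * A'" by (auto elim: dvdE)
    have crp: "\<forall>z. poly (cp p) z = 0 \<longrightarrow> (\<exists>x. z = complex_of_real x)"
      using cr by (simp add: cp_mult)
    have Hp: "\<forall>y. poly p y = 0 \<longrightarrow> [:-y, 1:] ^ order y p dvd A'"
    proof (intro allI impI)
      fix y assume py: "poly p y = 0"
      then have yx: "y \<noteq> x" using root.hyps(2) by auto
      have oL: "order y ?L = 0" using yx by (intro order_0I) simp
      have "order y (?L * p) = order y p" using G0 oL by (simp add: order_mult)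
      then have d: "[:-y, 1:] ^ order y p dvd ?L * A'" using H py A' by (metis poly_mult mult_zero_right)
      show "[:-y, 1:] ^ order y p dvd A'"
      proof (cases "A' = 0")
        case False
        then have "order y p \<le> order y (?L * A')" using d by (simp add: order_divides)
        also have "\<dots> = order y A'" using False oL by (simp add: order_mult)
        finally show ?thesis by (simp add: order_divides)
      qed simp
    qed
    have "p dvd A'" using root.IH p0 crp Hp by blast
    then show "?L * p dvd A" using A' by simp
  qed
qed


context curve
begin

lemma csq_eq: "csq q u = cmul q u u" by (simp add: csq_def)

lemma cmul_swap: "cmul q (cmul q a b) (cmul q c d) = cmul q (cmul q a c) (cmul q b d)"
proof -
  have "cmul q (cmul q a b) (cmul q c d) = cmul q a (cmul q (cmul q b c) d)"
    by (simp only: cmul_assoc)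
  also have "\<dots> = cmul q a (cmul q (cmul q c b) d)" by (simp only: cmul_comm[of q b c])
  also have "\<dots> = cmul q (cmul q a c) (cmul q b d)" by (simp only: cmul_assoc)
  finally show ?thesis .
qed

lemma sqrt_lemma:
  assumes rsq: "rsquarefree (cp q)" and v: "v \<noteq> czero"
    and h: "cmul q w (csq q v) = csq q s"
  shows "\<exists>k. cmul q k k = w"
proof -
  define n where "n = cnorm q v"
  have n0: "n \<noteq> 0" using v by (simp add: n_def cnorm_eq_0)
  define S where "S = cmul q s (cconj v)"
  have "cmul q S S = cmul q (cmul q s s) (cmul q (cconj v) (cconj v))"
    unfolding S_def by (rule cmul_swap)
  also have "\<dots> = cmul q (cmul q w (cmul q v v)) (cmul q (cconj v) (cconj v))"
    using h by (simp add: csq_def)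
  also have "\<dots> = cmul q w (cmul q (cmul q v (cconj v)) (cmul q v (cconj v)))"
    by (subst cmul_assoc, subst cmul_swap, rule refl)
  also have "\<dots> = (n * n * fst w, n * n * snd w)"
    by (simp only: cmul_conj n_def) (simp add: cmul_def)
  finally have SS: "cmul q S S = (n * n * fst w, n * n * snd w)" .
  obtain S0 S1 where S: "S = (S0, S1)" by (cases S)
  have e0: "S0 * S0 - q * S1 * S1 = n * n * fst w" and e1: "S0 * S1 + S1 * S0 = n * n * snd w"
    using SS S by (simp_all add: cmul_def)
  define N where "N = S0 ^ 2 + q * S1 ^ 2"
  have "N ^ 2 = (S0 * S0 - q * S1 * S1) ^ 2 + q * (S0 * S1 + S1 * S0) ^ 2"
    unfolding N_def by (simp add: power2_eq_square algebra_simps)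
  also have "\<dots> = (n ^ 2) ^ 2 * (fst w ^ 2 + q * snd w ^ 2)"
    unfolding e0 e1 by (simp add: power2_eq_square algebra_simps)
  finally have "(n ^ 2) ^ 2 dvd N ^ 2" by simp
  then have nN: "n ^ 2 dvd N" using pow_divides_pow_iff[of 2 "n ^ 2" N] by simp
  have "N + n ^ 2 * fst w = smult 2 (S0 ^ 2)"
  proof -
    have "smult 2 (S0 ^ 2) = S0 ^ 2 + S0 ^ 2"
      using smult_add_left[of 1 1 "S0 ^ 2"] by (simp add: one_add_one)
    moreover have "N + n ^ 2 * fst w = S0 ^ 2 + S0 ^ 2"
      unfolding N_def power2_eq_square e0[symmetric] by (simp add: algebra_simps)
    ultimately show ?thesis by simp
  qed
  moreover have "n ^ 2 dvd N + n ^ 2 * fst w" using nN by simp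
  ultimately have "n ^ 2 dvd S0 ^ 2" by (metis dvd_smult_cancel zero_neq_numeral)
  then have nS0: "n dvd S0" by simp
  then have "n ^ 2 dvd S0 ^ 2" by simp
  then have "n ^ 2 dvd N - S0 ^ 2" using nN by simp
  then have "n ^ 2 dvd q * S1 ^ 2" unfolding N_def by simp
  then have nS1: "n dvd S1" by (rule sqfree_dvd[OF rsq])
  define k where "k = (S0 div n, S1 div n)"
  have nk: "cmul q (n, 0) k = S" unfolding k_def S using nS0 nS1 by (simp add: cmul_def)
  have "cmul q (n, 0) (cmul q (n, 0) (cmul q k k)) = cmul q S S"
    unfolding nk[symmetric] by (subst cmul_swap, subst cmul_assoc, rule refl)
  also have "\<dots> = cmul q (n, 0) (cmul q (n, 0) w)" unfolding SS by (simp add: cmul_def)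
  finally have eq: "cmul q (n, 0) (cmul q (n, 0) (cmul q k k)) = cmul q (n, 0) (cmul q (n, 0) w)" .
  have nz: "(n, 0) \<noteq> czero" using n0 by (simp add: czero_def)
  have "cmul q (n, 0) (cmul q k k) = cmul q (n, 0) w" by (rule cmul_cancel[OF nz eq])
  then have "cmul q k k = w" by (rule cmul_cancel[OF nz])
  then show ?thesis by blast
qed

lemma csos_mult: "cmul q c (csos q xs) = csos q (map (cmul q d) xs)" if "cmul q d d = c"
  using that
proof (induction xs)
  case Nil then show ?case by (simp add: csos_def cmul_czero)
next
  case (Cons x xs)
  have "csos q (x # xs) = cadd (csq q x) (csos q xs)" by (simp add: csos_def)
  moreover have "csos q (map (cmul q d) (x # xs)) = cadd (csq q (cmul q d x)) (csos q (map (cmul q d) xs))"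
    by (simp add: csos_def)
  moreover have "cmul q c (csq q x) = csq q (cmul q d x)"
    using Cons.prems by (auto simp: csq_def cmul_def algebra_simps)
  ultimately show ?case using Cons by (simp add: cmul_cadd)
qed

lemma csos_allzero: "(\<forall>b\<in>set xs. b = czero) \<Longrightarrow> csos q xs = czero"
  by (induction xs) (auto simp: csos_def csq_def cmul_def cadd_def czero_def)

lemma delta_nat: "u \<noteq> czero \<Longrightarrow> \<exists>m::nat. delta u = ereal (real m)"
proof -
  assume u: "u \<noteq> czero"
  obtain a b where ab: "u = (a, b)" by (cases u)
  show ?thesis
  proof (cases "b = 0")
    case True
    then have "a \<noteq> 0" using u ab by (simp add: czero_def)
    then show ?thesis using True ab by (intro exI[of _ "degree a"]) (simp add: delta_def pdeg_def)
  next
    case False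
    show ?thesis
    proof (cases "a = 0")
      case True
      then show ?thesis using False ab
        by (intro exI[of _ "degree b + 2"]) (simp add: delta_def pdeg_def)
    next
      case False': False
      then show ?thesis using False ab
        by (intro exI[of _ "max (degree a) (degree b + 2)"]) (simp add: delta_def pdeg_def max_def)
    qed
  qed
qed

end

lemma ereal_aux:
  fixes A B :: ereal and rg rf rk :: real
  assumes "ereal rg + A = ereal rk + B" "ereal rk + ereal rk = ereal rf + ereal rg"
    "A \<noteq> \<infinity>" "B \<noteq> \<infinity>"
  shows "A = B + (ereal rf - ereal rg) / 2"
  using assms by (cases A; cases B) (auto simp: field_simps)

lemma cmul_aux1: "cmul q (cmul q f g) X = cmul q g (cmul q f X)"
  by (simp add: cmul_def algebra_simps)

lemma cmul_aux2: "cmul q g (cmul q g (cmul q u u)) = cmul q (cmul q u g) (cmul q u g)"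
  by (simp add: cmul_def algebra_simps)

lemma cmul_aux3: "cmul q (cmul q g g) f = cmul q (cmul q f g) g"
  by (simp add: cmul_def algebra_simps)

context curve
begin

lemma main1:
  assumes rsq: "rsquarefree (cp q)"
    and zr: "\<forall>x y. on_curve q x y \<and> ceval g x y = 0 \<longrightarrow> Im x = 0 \<and> Im y = 0"
    and f: "f \<noteq> czero" and g: "g \<noteq> czero" and k: "cmul q k k = cmul q f g"
    and gs: "g = csos q bs"
  shows "\<exists>as. length as = length bs \<and> f = csos q as \<and>
              (\<forall>i<length bs. delta (as ! i) = delta (bs ! i) + (delta f - delta g) / 2)"
proof -
  define G where "G = cnorm q g"
  have G0: "G \<noteq> 0" using g by (simp add: G_def cnorm_eq_0)
  define W where "W b = cmul q (cmul q k b) (cconj g)" for b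
  have roots: "\<forall>z. poly (cp G) z = 0 \<longrightarrow> (\<exists>x. z = complex_of_real x)"
    using G_roots[OF zr] unfolding G_def by blast
  have dvdw: "G dvd fst (W b) \<and> G dvd snd (W b)" if b: "b \<in> set bs" for b
  proof -
    have H: "[:-x, 1:] ^ order x G dvd fst (W b) \<and> [:-x, 1:] ^ order x G dvd snd (W b)"
      if px: "poly G x = 0" for x
    proof -
      have "poly (cp G) (complex_of_real x) = 0" using px by (simp add: poly_cp_real)
      then obtain x0 y0 where xy: "complex_of_real x = complex_of_real x0" "y0 ^ 2 + poly q x0 = 0"
        using G_roots[OF zr] unfolding G_def by blast
      then have x: "x = x0" by simp
      show ?thesis
      proof (cases "y0 = 0")
        case True
        then have "poly q x = 0" using xy x by simp
        then show ?thesis using ram_dvd[OF _ rsq_nsq[OF rsq] k f g gs b] unfolding W_def G_def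
          by blast
      next
        case False
        then have "y0 ^ 2 > 0" by simp
        then have "poly q x0 < 0" using xy(2) by linarith
        then have "poly q x < 0" using x by simp
        then show ?thesis using unram_dvd[OF _ k f g gs b] unfolding W_def G_def by blast
      qed
    qed
    show ?thesis using dvd_from_orders[of G] G0 roots H by blast
  qed
  define af where "af b = (fst (W b) div G, snd (W b) div G)" for b
  have cg: "cconj g \<noteq> czero" using g by (cases g) (simp add: cconj_def czero_def)
  have gaf: "cmul q g (af b) = cmul q k b" if b: "b \<in> set bs" for b
  proof -
    have cG: "cmul q (cconj g) g = (G, 0)"
      using cmul_comm cmul_conj G_def by metis
    have "cmul q (cconj g) (cmul q g (af b)) = cmul q (cmul q (cconj g) g) (af b)"
      by (rule cmul_assoc[symmetric])
    also have "\<dots> = cmul q (G, 0) (af b)" by (simp only: cG)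
    also have "\<dots> = W b"
      using dvdw[OF b] by (simp add: cmul_const af_def)
    also have "\<dots> = cmul q (cconj g) (cmul q k b)" unfolding W_def by (rule cmul_comm)
    finally have "cmul q (cconj g) (cmul q g (af b)) = cmul q (cconj g) (cmul q k b)" .
    then show ?thesis using cmul_cancel[OF cg] by blast
  qed
  define as where "as = map af bs"
  have gg: "cmul q g g \<noteq> czero" using g by (simp add: cmul_eq_czero)
  have "cmul q (cmul q g g) (csos q as) = csos q (map (cmul q g) as)"
    by (rule csos_mult) simp
  also have "map (cmul q g) as = map (cmul q k) bs"
    unfolding as_def using gaf by simp
  also have "csos q (map (cmul q k) bs) = cmul q (cmul q k k) (csos q bs)"
    by (rule csos_mult[symmetric]) simp
  also have "\<dots> = cmul q (cmul q g g) f" using k gs cmul_aux3 by simp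
  finally have "f = csos q as" using cmul_cancel[OF gg] by metis
  moreover have "delta (as ! i) = delta (bs ! i) + (delta f - delta g) / 2" if i: "i < length bs" for i
  proof -
    have b: "bs ! i \<in> set bs" using i by simp
    have a: "as ! i = af (bs ! i)" using i by (simp add: as_def)
    have e1: "delta g + delta (as ! i) = delta k + delta (bs ! i)"
      using gaf[OF b] a delta_mult by metis
    have knz: "k \<noteq> czero" using k f g cmul_eq_czero by metis
    have e2: "delta k + delta k = delta f + delta g" using k delta_mult by metis
    obtain mg where mg: "delta g = ereal (real mg)" using delta_nat[OF g] by blast
    obtain mf where mf: "delta f = ereal (real mf)" using delta_nat[OF f] by blast
    obtain mk where mk: "delta k = ereal (real mk)" using delta_nat[OF knz] by blast
    show ?thesis using ereal_aux[of mg "delta (as ! i)" mk "delta (bs ! i)" mf] e1 e2 mg mf mk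
        delta_not_inf by simp
  qed
  moreover have "length as = length bs" by (simp add: as_def)
  ultimately show ?thesis by blast
qed

end

theorem lemma2p12:
  fixes q :: "real poly" and f g :: crd and bs :: "crd list"
  assumes q_monic: "lead_coeff q = 1"
    and q_deg: "degree q = 4"
    and q_sqfree: "rsquarefree (map_poly complex_of_real q)"
    and q_indef: "(\<exists>x. poly q x > 0) \<and> (\<exists>x. poly q x < 0)"
    and f_nz: "f \<noteq> czero" and g_nz: "g \<noteq> czero"
    and f_psd: "psd q f" and g_psd: "psd q g"
    and g_zeros_real: "\<forall>x y. on_curve q x y \<and> ceval g x y = 0 \<longrightarrow> Im x = 0 \<and> Im y = 0"
    and fg_square: "\<exists>u v. v \<noteq> czero \<and> cmul q f (csq q v) = cmul q g (csq q u)"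
  shows "(g = csos q bs \<longrightarrow>
           (\<exists>as. length as = length bs \<and> f = csos q as \<and>
              (\<forall>i<length bs. delta (as ! i) = delta (bs ! i) + (delta f - delta g) / 2)))
      \<and> 2 * theta q f - delta f \<le> 2 * theta q g - delta g"
proof -
  interpret curve q by unfold_locales (rule q_monic, rule q_deg)
  obtain u v where v: "v \<noteq> czero" and uv: "cmul q f (csq q v) = cmul q g (csq q u)"
    using fg_square by blast
  have "cmul q (cmul q f g) (csq q v) = cmul q g (cmul q f (csq q v))" by (rule cmul_aux1)
  also have "\<dots> = cmul q g (cmul q g (csq q u))" using uv by simp
  also have "\<dots> = csq q (cmul q u g)" by (simp add: csq_def cmul_aux2)
  finally obtain k where k: "cmul q k k = cmul q f g" using sqrt_lemma[OF q_sqfree v] by blast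
  note M = main1[OF q_sqfree g_zeros_real f_nz g_nz k]
  have part1: "g = csos q bs \<longrightarrow>
           (\<exists>as. length as = length bs \<and> f = csos q as \<and>
              (\<forall>i<length bs. delta (as ! i) = delta (bs ! i) + (delta f - delta g) / 2))"
    using M by blast
  obtain mg where mg: "delta g = ereal (real mg)" using delta_nat[OF g_nz] by blast
  obtain mf where mf: "delta f = ereal (real mf)" using delta_nat[OF f_nz] by blast
  have part2: "2 * theta q f - delta f \<le> 2 * theta q g - delta g"
  proof (cases "\<exists>d::nat. \<exists>fs. g = csos q fs \<and> (\<forall>h\<in>set fs. delta h \<le> ereal (real d))")
    case False
    then have "theta q g = \<infinity>" by (simp add: theta_def)
    then show ?thesis using mg by simp
  next
    case True
    define P where "P d \<longleftrightarrow> (\<exists>fs. g = csos q fs \<and> (\<forall>h\<in>set fs. delta h \<le> ereal (real d)))" for d :: nat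
    define d0 where "d0 = (LEAST d. P d)"
    have Pd0: "P d0" unfolding d0_def using True LeastI_ex[of P] by (auto simp: P_def)
    have thg: "theta q g = ereal (real d0)"
      using True by (simp add: theta_def d0_def P_def)
    from Pd0 obtain bs0 where bs0: "g = csos q bs0" "\<forall>h\<in>set bs0. delta h \<le> ereal (real d0)"
      by (auto simp: P_def)
    from M bs0(1) obtain as0 where as0: "length as0 = length bs0" "f = csos q as0"
      "\<forall>i<length bs0. delta (as0 ! i) = delta (bs0 ! i) + (delta f - delta g) / 2"
      by blast
    define rD where "rD = (real mf - real mg) / 2"
    have D: "(delta f - delta g) / 2 = ereal rD" using mf mg by (simp add: rD_def)
    have "\<exists>b\<in>set bs0. b \<noteq> czero"
      using csos_allzero[of bs0] bs0(1) g_nz by blast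
    then obtain i where i: "i < length bs0" "bs0 ! i \<noteq> czero"
      by (metis in_set_conv_nth)
    obtain mb where mb: "delta (bs0 ! i) = ereal (real mb)" using delta_nat[OF i(2)] by blast
    have dai: "delta (as0 ! i) = ereal (real mb + rD)" using as0(3) i(1) mb D by simp
    then have "as0 ! i \<noteq> czero" using delta_czero by auto
    then obtain ma where ma: "delta (as0 ! i) = ereal (real ma)" using delta_nat by blast
    have rDe: "rD = real ma - real mb" using dai ma by simp
    have mbd: "mb \<le> d0" using bs0(2) i mb by (metis nth_mem ereal_less_eq(3) of_nat_le_iff)
    define d' where "d' = d0 - mb + ma"
    have d'r: "real d' = real d0 + rD" using mbd rDe by (simp add: d'_def)
    have "\<forall>h\<in>set as0. delta h \<le> ereal (real d')"
    proof
      fix h assume "h \<in> set as0"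
      then obtain j where j: "j < length as0" "h = as0 ! j" by (metis in_set_conv_nth)
      then have "delta h = delta (bs0 ! j) + ereal rD" using as0 D by simp
      also have "\<dots> \<le> ereal (real d0) + ereal rD"
        using bs0(2) j as0(1) by (intro add_right_mono) auto
      also have "\<dots> = ereal (real d')" using d'r by simp
      finally show "delta h \<le> ereal (real d')" .
    qed
    then have Pf: "\<exists>fs. f = csos q fs \<and> (\<forall>h\<in>set fs. delta h \<le> ereal (real d'))"
      using as0(2) by blast
    define tf where "tf = (LEAST d::nat. \<exists>fs. f = csos q fs \<and> (\<forall>h\<in>set fs. delta h \<le> ereal (real d)))"
    have thf: "theta q f = ereal (real tf)"
      using Pf unfolding theta_def tf_def by auto
    have "tf \<le> d'" unfolding tf_def by (rule Least_le) (rule Pf)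
    then have "real tf \<le> real d0 + rD" using d'r by linarith
    then have "2 * real tf - real mf \<le> 2 * real d0 - real mg" unfolding rD_def by (simp add: field_simps)
    then show ?thesis using thf thg mf mg by simp
  qed
  show ?thesis using part1 part2 by blast
qed


end
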